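(* Let $n\ge2$ and $0<c\le\frac1n$. Set $\delta=\frac1n+\frac{\sqrt{-(n^2-1)(c^4-c^2)}}{n(c^2-1)}$. Then $0\le\delta<\frac1n$, and the set $\mathcal P^\delta$ of columns of the matrix $P^\delta$ (with $[P^\delta]_1=d_1$ and $[P^\delta]_i=\alpha(d_i+\delta e_1)$ for $2\le i\le n+1$, $\alpha=\frac{n}{\sqrt{n^2\delta^2-2n\delta+n^2}}$, where $[d_1\ \cdots\ d_{n+1}]$ is the canonical uniform simplex) is a positive basis of $\mathbb R^n$ with cosine measure $c$.
   Context: The canonical uniform simplex is the $n\times(n+1)$ matrix defined as follows, with $a_i=\sqrt{\frac{(n-i+1)(n+1)}{n(n-i+2)}}$ for $i=1,\dots,n$: for $1\le j\le n$, column $j$ has entry $-\frac{a_i}{n-i+1}$ in row $i<j$, entry $a_j$ in row $j$, and $0$ in rows $i>j$; column $n+1$ has entry $-\frac{a_i}{n-i+1}$ in every row $i$. A finite set $\mathcal P$ is a positive basis if its positive span $\{\sum\lambda_id_i:\lambda_i\ge0\}$ is $\mathbb R^n$ and no $d\in\mathcal P$ lies in the positive span of $\mathcal P\setminus\{d\}$. The cosine measure of a finite $\mathcal S\subset\mathbb R^n\setminus\{\mathbf 0\}$ is $\min_{\|u\|=1}\max_{d\in\mathcal S}\frac{d^\top u}{\|d\|}$. *)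

theory Defs
  imports "HOL-Analysis.Analysis"
begin

text \<open>Vectors of R^n are elements of real^'n with n = CARD('n); the coordinate
  rows 1..n of the paper are identified with the elements of 'n through a
  bijection idx :: 'n => nat onto {1..n}.\<close>

definition simplex_a :: "nat \<Rightarrow> nat \<Rightarrow> real" where
  "simplex_a n i = sqrt ((real n - real i + 1) * (real n + 1) / (real n * (real n - real i + 2)))"

text \<open>Entry in row i (1..n) and column j (1..n+1) of the canonical uniform simplex.\<close>
definition simplex_entry :: "nat \<Rightarrow> nat \<Rightarrow> nat \<Rightarrow> real" where
  "simplex_entry n i j =
     (if j \<le> n then
        (if i < j then - simplex_a n i / (real n - real i + 1)
         else if i = j then simplex_a n j else 0)
      else - simplex_a n i / (real n - real i + 1))"

definition simplex_col :: "('n::finite \<Rightarrow> nat) \<Rightarrow> nat \<Rightarrow> real^'n" where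
  "simplex_col idx j = (\<chi> k. simplex_entry CARD('n) (idx k) j)"

definition unit_e1 :: "('n::finite \<Rightarrow> nat) \<Rightarrow> real^'n" where
  "unit_e1 idx = (\<chi> k. if idx k = 1 then 1 else 0)"

definition delta_of :: "nat \<Rightarrow> real \<Rightarrow> real" where
  "delta_of n c = 1 / real n
     + sqrt (- ((real n)^2 - 1) * (c^4 - c^2)) / (real n * (c^2 - 1))"

definition alpha_of :: "nat \<Rightarrow> real \<Rightarrow> real" where
  "alpha_of n \<delta> = real n / sqrt ((real n)^2 * \<delta>^2 - 2 * real n * \<delta> + (real n)^2)"

definition Pdelta_col :: "('n::finite \<Rightarrow> nat) \<Rightarrow> real \<Rightarrow> nat \<Rightarrow> real^'n" where
  "Pdelta_col idx \<delta> j =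
     (if j = 1 then simplex_col idx 1
      else alpha_of CARD('n) \<delta> *\<^sub>R (simplex_col idx j + \<delta> *\<^sub>R unit_e1 idx))"

definition Pdelta_set :: "('n::finite \<Rightarrow> nat) \<Rightarrow> real \<Rightarrow> (real^'n) set" where
  "Pdelta_set idx \<delta> = Pdelta_col idx \<delta> ` {1..CARD('n) + 1}"

definition positive_span :: "'a::real_vector set \<Rightarrow> 'a set" where
  "positive_span S = {x. \<exists>l. (\<forall>d\<in>S. 0 \<le> l d) \<and> x = (\<Sum>d\<in>S. l d *\<^sub>R d)}"

definition positive_basis :: "'a::real_vector set \<Rightarrow> bool" where
  "positive_basis P \<longleftrightarrow> finite P \<and> positive_span P = UNIV
     \<and> (\<forall>d\<in>P. d \<notin> positive_span (P - {d}))"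

text \<open>Cosine measure: min over unit u of max over d of d.u/|d| (the minimum is
  attained by compactness, so it equals the infimum).\<close>
definition cosine_measure :: "'a::euclidean_space set \<Rightarrow> real" where
  "cosine_measure S = (INF u\<in>sphere 0 1. (MAX d\<in>S. inner d u / norm d))"

end

theory Submission
  imports Defs
begin

definition sB :: "nat \<Rightarrow> nat \<Rightarrow> real" where
  "sB n i = - simplex_a n i / (real n - real i + 1)"

lemma a_sq:
  assumes "1 \<le> i" "i \<le> n"
  shows "(simplex_a n i)^2 = (real n - real i + 1) * (real n + 1) / (real n * (real n - real i + 2))"
proof -
  have "real i \<le> real n" using assms by simp
  hence "0 \<le> (real n - real i + 1) * (real n + 1) / (real n * (real n - real i + 2))"
    by (intro divide_nonneg_pos mult_nonneg_nonneg mult_pos_pos) (use assms in auto)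
  thus ?thesis unfolding simplex_a_def by simp
qed

lemma a_one: "n \<ge> 1 \<Longrightarrow> simplex_a n 1 = 1"
  unfolding simplex_a_def by simp

lemma entry_eq:
  assumes "1 \<le> i" "i \<le> n" "1 \<le> j" "j \<le> n + 1"
  shows "simplex_entry n i j = (if i < j then sB n i else if i = j then simplex_a n i else 0)"
  using assms unfolding simplex_entry_def sB_def by auto

lemma sB_sq:
  assumes "1 \<le> i" "i \<le> n"
  shows "(sB n i)^2 = (real n + 1) / (real n * (real n - real i + 1) * (real n - real i + 2))"
proof -
  have p: "real n - real i + 1 > 0" using assms by simp
  have "(sB n i)^2 = (simplex_a n i)^2 / (real n - real i + 1)^2"
    unfolding sB_def by (simp add: power_divide)
  also have "\<dots> = ((real n - real i + 1) * (real n + 1) / (real n * (real n - real i + 2))) / (real n - real i + 1)^2"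
    by (simp add: a_sq[OF assms])
  also have "\<dots> = (real n + 1) / (real n * (real n - real i + 1) * (real n - real i + 2))"
  proof -
    define k where "k = real n - real i + 1"
    have k2: "real n - real i + 2 = k + 1" unfolding k_def by simp
    have "k > 0" "real n > 0" "k + 1 > 0" using p assms unfolding k_def by auto
    thus ?thesis unfolding k2 k_def[symmetric] by (simp add: power2_eq_square divide_simps)
  qed
  finally show ?thesis .
qed

lemma telesc:
  assumes "m \<le> n + 1" "n \<ge> 1" "1 \<le> m"
  shows "(\<Sum>i\<in>{1..<m}. (sB n i)^2) = (real n + 1) / real n * (1 / (real n - real m + 2) - 1 / (real n + 1))"
  using assms
proof (induction m)
  case 0
  then show ?case by simp
next
  case (Suc m)
  show ?case
  proof (cases "m = 0")
    case True then show ?thesis using Suc by (simp add: field_simps)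
  next
    case False
    hence "{1..<Suc m} = insert m {1..<m}" by auto
    hence "(\<Sum>i\<in>{1..<Suc m}. (sB n i)^2) = (sB n m)^2 + (\<Sum>i\<in>{1..<m}. (sB n i)^2)" by simp
    also have "\<dots> = (real n + 1) / (real n * (real n - real m + 1) * (real n - real m + 2))
        + (real n + 1) / real n * (1 / (real n - real m + 2) - 1 / (real n + 1))"
      using Suc False by (simp add: sB_sq)
    also have "\<dots> = (real n + 1) / real n * (1 / (real n - real (Suc m) + 2) - 1 / (real n + 1))"
    proof -
      have "real m \<le> real n" using Suc by simp
      define k where "k = real n - real m + 1"
      have k2: "real n - real m + 2 = k + 1" "real n - real (Suc m) + 2 = k" unfolding k_def by auto
      have p1: "k > 0" "real n > 0" "k + 1 > 0" "real n + 1 > 0" using Suc \<open>real m \<le> real n\<close> unfolding k_def by auto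
      show ?thesis unfolding k2 k_def[symmetric] using p1 by (simp add: divide_simps) (simp add: algebra_simps)
    qed
    finally show ?thesis .
  qed
qed

lemma sum_gt_filter:
  fixes i n :: nat
  assumes "i \<le> n"
  shows "(\<Sum>j\<in>{1..n+1}. if i < j then f j else 0) = (\<Sum>j\<in>{Suc i..n+1}. (f j::real))"
proof -
  have "(\<Sum>j\<in>{1..n+1}. if i < j then f j else 0) = (\<Sum>j\<in>{1..n+1} \<inter> {j. i < j}. f j)"
    by (simp add: sum.inter_restrict)
  also have "{1..n+1} \<inter> {j. i < j} = {Suc i..n+1}" by auto
  finally show ?thesis .
qed

lemma sum_lt_filter:
  fixes j n :: nat
  assumes "j \<le> n + 1"
  shows "(\<Sum>i\<in>{1..n}. if i < j then f i else 0) = (\<Sum>i\<in>{1..<j}. (f i::real))"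
proof -
  have "(\<Sum>i\<in>{1..n}. if i < j then f i else 0) = (\<Sum>i\<in>{1..n} \<inter> {i. i < j}. f i)"
    using sum.inter_restrict[of "{1..n}" f "{i. i < j}"] by simp
  also have "{1..n} \<inter> {i. i < j} = {1..<j}" using assms by auto
  finally show ?thesis .
qed

lemma nB:
  assumes "1 \<le> i" "i \<le> n"
  shows "real (n + 1 - i) * sB n i = - simplex_a n i"
proof -
  have "real (n + 1 - i) = real n - real i + 1" using assms by (simp add: of_nat_diff)
  moreover have "real n - real i + 1 > 0" using assms by simp
  ultimately show ?thesis unfolding sB_def by (simp add: field_simps)
qed

lemma row0:
  assumes "1 \<le> i" "i \<le> n"
  shows "(\<Sum>j\<in>{1..n+1}. simplex_entry n i j) = 0"
proof -
  have "(\<Sum>j\<in>{1..n+1}. simplex_entry n i j)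
     = (\<Sum>j\<in>{1..n+1}. (if i < j then sB n i else 0) + (if i = j then simplex_a n i else 0))"
    by (rule sum.cong) (use assms in \<open>auto simp: entry_eq\<close>)
  also have "\<dots> = real (n + 1 - i) * sB n i + simplex_a n i"
    using assms unfolding sum.distrib sum_gt_filter[OF assms(2)] by simp
  also have "\<dots> = 0" using nB[OF assms] by simp
  finally show ?thesis .
qed

lemma row_lt:
  assumes "1 \<le> i" "i < k" "k \<le> n"
  shows "(\<Sum>j\<in>{1..n+1}. simplex_entry n i j * simplex_entry n k j) = 0"
proof -
  have "(\<Sum>j\<in>{1..n+1}. simplex_entry n i j * simplex_entry n k j)
     = (\<Sum>j\<in>{1..n+1}. (if k < j then sB n i * sB n k else 0) + (if k = j then sB n i * simplex_a n k else 0))"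
    by (rule sum.cong) (use assms in \<open>auto simp: entry_eq\<close>)
  also have "\<dots> = sB n i * (real (n + 1 - k) * sB n k + simplex_a n k)"
    using assms unfolding sum.distrib sum_gt_filter[OF assms(3)] by (simp add: algebra_simps)
  also have "\<dots> = 0" using nB[of k n] assms by simp
  finally show ?thesis .
qed

lemma row_eq:
  assumes "1 \<le> i" "i \<le> n"
  shows "(\<Sum>j\<in>{1..n+1}. simplex_entry n i j * simplex_entry n i j) = (real n + 1) / real n"
proof -
  have "(\<Sum>j\<in>{1..n+1}. simplex_entry n i j * simplex_entry n i j)
     = (\<Sum>j\<in>{1..n+1}. (if i < j then (sB n i)^2 else 0) + (if i = j then (simplex_a n i)^2 else 0))"
    by (rule sum.cong) (use assms in \<open>auto simp: entry_eq power2_eq_square\<close>)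
  also have "\<dots> = real (n + 1 - i) * (sB n i)^2 + (simplex_a n i)^2"
    using assms unfolding sum.distrib sum_gt_filter[OF assms(2)] by simp
  also have "\<dots> = (real n + 1) / real n"
  proof -
    define k where "k = real n - real i + 1"
    have e1: "real (n + 1 - i) = k" using assms unfolding k_def by (simp add: of_nat_diff)
    have e2: "real n - real i + 2 = k + 1" unfolding k_def by simp
    have p: "k > 0" "real n > 0" "k + 1 > 0" using assms unfolding k_def by auto
    show ?thesis unfolding e1 sB_sq[OF assms] a_sq[OF assms] e2 k_def[symmetric]
      using p by (simp add: divide_simps) (simp add: algebra_simps)
  qed
  finally show ?thesis .
qed

lemma col_lt:
  assumes "1 \<le> j" "j < k" "k \<le> n + 1"
  shows "(\<Sum>i\<in>{1..n}. simplex_entry n i j * simplex_entry n i k) = - 1 / real n"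
proof -
  have "(\<Sum>i\<in>{1..n}. simplex_entry n i j * simplex_entry n i k)
     = (\<Sum>i\<in>{1..n}. (if i < j then (sB n i)^2 else 0) + (if j = i then simplex_a n j * sB n j else 0))"
    by (rule sum.cong) (use assms in \<open>auto simp: entry_eq power2_eq_square\<close>)
  also have "\<dots> = (\<Sum>i\<in>{1..<j}. (sB n i)^2) + simplex_a n j * sB n j"
    using assms unfolding sum.distrib sum_lt_filter[of j n, OF order.strict_implies_order[OF less_le_trans[OF assms(2,3)]]] by simp
  also have "\<dots> = - 1 / real n"
  proof -
    have jn: "j \<le> n" "n \<ge> 1" "j \<le> n + 1" using assms by auto
    define q where "q = real n - real j + 1"
    have e2: "real n - real j + 2 = q + 1" unfolding q_def by simp
    have p: "q > 0" "real n > 0" "q + 1 > 0" "real n + 1 > 0" using jn unfolding q_def by auto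
    have ab: "simplex_a n j * sB n j = - ((simplex_a n j)^2 / q)"
      unfolding sB_def q_def by (simp add: power2_eq_square)
    show ?thesis unfolding telesc[OF jn(3) jn(2) assms(1)] ab a_sq[OF assms(1) jn(1)] e2 q_def[symmetric]
      using p assms by (simp add: divide_simps)
  qed
  finally show ?thesis .
qed

lemma col_eq:
  assumes "1 \<le> j" "j \<le> n + 1" "n \<ge> 1"
  shows "(\<Sum>i\<in>{1..n}. simplex_entry n i j * simplex_entry n i j) = 1"
proof -
  have "(\<Sum>i\<in>{1..n}. simplex_entry n i j * simplex_entry n i j)
     = (\<Sum>i\<in>{1..n}. (if i < j then (sB n i)^2 else 0) + (if j = i then (simplex_a n j)^2 else 0))"
    by (rule sum.cong) (use assms in \<open>auto simp: entry_eq power2_eq_square\<close>)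
  also have "\<dots> = (\<Sum>i\<in>{1..<j}. (sB n i)^2) + (if j \<le> n then (simplex_a n j)^2 else 0)"
    using assms unfolding sum.distrib sum_lt_filter[OF assms(2)] by simp
  also have "\<dots> = 1"
  proof (cases "j \<le> n")
    case True
    define q where "q = real n - real j + 1"
    have e2: "real n - real j + 2 = q + 1" unfolding q_def by simp
    have p: "q > 0" "real n > 0" "q + 1 > 0" "real n + 1 > 0" using True assms unfolding q_def by auto
    show ?thesis using True unfolding telesc[of j n, OF assms(2,3,1)] a_sq[OF assms(1) True] e2 q_def[symmetric]
      using p by (simp add: divide_simps) (simp add: algebra_simps)
  next
    case False
    hence j: "j = n + 1" using assms by simp
    have "real n > 0" using assms by simp
    thus ?thesis using telesc[of "n+1" n] assms unfolding j by (simp add: divide_simps)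
  qed
  finally show ?thesis .
qed

lemma idx_range:
  assumes "bij_betw (idx::'n::finite \<Rightarrow> nat) UNIV {1..CARD('n)}"
  shows "1 \<le> idx k" "idx k \<le> CARD('n)"
  using assms unfolding bij_betw_def by auto

lemma idx_inj:
  assumes "bij_betw (idx::'n::finite \<Rightarrow> nat) UNIV {1..CARD('n)}"
  shows "idx k = idx k' \<longleftrightarrow> k = k'"
  using assms unfolding bij_betw_def inj_def by auto

lemma col_inner:
  assumes bij: "bij_betw (idx::'n::finite \<Rightarrow> nat) UNIV {1..CARD('n)}"
    and j: "1 \<le> j" "j \<le> CARD('n) + 1" and k: "1 \<le> k" "k \<le> CARD('n) + 1"
  shows "inner (simplex_col idx j) (simplex_col idx k) = (if j = k then 1 else - 1 / real CARD('n))"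
proof -
  let ?n = "CARD('n)"
  have "inner (simplex_col idx j) (simplex_col idx k)
     = (\<Sum>q\<in>UNIV. (\<lambda>i. simplex_entry ?n i j * simplex_entry ?n i k) (idx q))"
    unfolding inner_vec_def simplex_col_def by simp
  also have "\<dots> = (\<Sum>i\<in>{1..?n}. simplex_entry ?n i j * simplex_entry ?n i k)"
    by (rule sum.reindex_bij_betw[OF bij])
  also have "\<dots> = (if j = k then 1 else - 1 / real ?n)"
  proof -
    have n1: "?n \<ge> 1" using bij idx_range by fastforce
    consider "j = k" | "j < k" | "k < j" by linarith
    thus ?thesis
    proof cases
      case 1 thus ?thesis using col_eq[OF j n1] by simp
    next
      case 2 thus ?thesis using col_lt[OF j(1) 2 k(2)] by simp
    next
      case 3 thus ?thesis using col_lt[OF k(1) 3 j(2)] by (simp add: mult.commute)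
    qed
  qed
  finally show ?thesis .
qed

lemma col_sum0:
  assumes bij: "bij_betw (idx::'n::finite \<Rightarrow> nat) UNIV {1..CARD('n)}"
  shows "(\<Sum>j\<in>{1..CARD('n)+1}. simplex_col idx j) = 0"
  unfolding vec_eq_iff simplex_col_def
  using row0 idx_range[OF bij] by simp

lemma col_frame:
  assumes bij: "bij_betw (idx::'n::finite \<Rightarrow> nat) UNIV {1..CARD('n)}"
  shows "(\<Sum>j\<in>{1..CARD('n)+1}. inner (simplex_col idx j) x *\<^sub>R simplex_col idx j)
     = ((real CARD('n) + 1) / real CARD('n)) *\<^sub>R x"
proof -
  let ?n = "CARD('n)"
  let ?E = "simplex_entry ?n"
  have rowg: "(\<Sum>j\<in>{1..?n+1}. ?E (idx q) j * ?E (idx k) j) = (if q = k then (real ?n + 1) / real ?n else 0)" for q k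
  proof -
    consider "idx q = idx k" | "idx q < idx k" | "idx k < idx q" by linarith
    thus ?thesis
    proof cases
      case 1 thus ?thesis using row_eq[OF idx_range[OF bij]] idx_inj[OF bij] by simp
    next
      case 2 thus ?thesis using row_lt[OF idx_range(1)[OF bij] 2 idx_range(2)[OF bij]] idx_inj[OF bij, of q k] by auto
    next
      case 3 thus ?thesis using row_lt[OF idx_range(1)[OF bij] 3 idx_range(2)[OF bij]] idx_inj[OF bij, of q k]
        by (auto simp: mult.commute)
    qed
  qed
  show ?thesis
  proof (rule iffD2[OF vec_eq_iff], rule allI)
    fix k
    have "(\<Sum>j\<in>{1..?n+1}. inner (simplex_col idx j) x *\<^sub>R simplex_col idx j) $ k
       = (\<Sum>j\<in>{1..?n+1}. (\<Sum>q\<in>UNIV. ?E (idx q) j * x $ q) * ?E (idx k) j)"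
      unfolding simplex_col_def inner_vec_def by simp
    also have "\<dots> = (\<Sum>j\<in>{1..?n+1}. \<Sum>q\<in>UNIV. x $ q * (?E (idx q) j * ?E (idx k) j))"
      by (intro sum.cong refl) (simp add: sum_distrib_left mult_ac)
    also have "\<dots> = (\<Sum>q\<in>UNIV. x $ q * (\<Sum>j\<in>{1..?n+1}. ?E (idx q) j * ?E (idx k) j))"
      by (subst sum.swap) (simp only: sum_distrib_left)
    also have "\<dots> = (\<Sum>q\<in>UNIV. if q = k then x $ q * ((real ?n + 1) / real ?n) else 0)"
      unfolding rowg by (rule sum.cong) auto
    also have "\<dots> = (((real ?n + 1) / real ?n) *\<^sub>R x) $ k" by simp
    finally show "(\<Sum>j\<in>{1..?n+1}. inner (simplex_col idx j) x *\<^sub>R simplex_col idx j) $ k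
       = (((real ?n + 1) / real ?n) *\<^sub>R x) $ k" .
  qed
qed

lemma e1_col:
  assumes bij: "bij_betw (idx::'n::finite \<Rightarrow> nat) UNIV {1..CARD('n)}"
  shows "unit_e1 idx = simplex_col idx 1"
proof -
  have n1: "CARD('n) \<ge> 1" by (simp add: Suc_leI)
  show ?thesis
    unfolding vec_eq_iff unit_e1_def simplex_col_def
    using idx_range[OF bij] entry_eq[of _ "CARD('n)" 1] a_one[OF n1] by auto
qed

lemma alg1: "(r::real) > 0 \<Longrightarrow> (r+1)/r - x^2 + 2*(x/r)*(-x) + r*(x/r)^2 = (r+1)*(1-x^2)/r"
  by (simp add: field_simps power2_eq_square)
lemma alg3: "(r::real) > 0 \<Longrightarrow> r^2*(r-1)*(c^2*(r^2-1)/r^2)*(1+x) = (r+1)*((r-1)^2*c^2*(1+x))"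
  by (simp add: field_simps power2_eq_square)

lemma key_ineq:
  fixes b :: "nat \<Rightarrow> real" and n :: nat
  assumes n2: "n \<ge> 2"
    and s0: "(\<Sum>j\<in>{1..n+1}. b j) = 0"
    and s2: "(\<Sum>j\<in>{1..n+1}. (b j)^2) = (real n + 1) / real n"
    and c: "0 < c" "c \<le> 1 / real n"
    and t: "t > 0" "t^2 * (1 - c^2) = c^2 * ((real n)^2 - 1) / (real n)^2"
    and x: "b 1 < c"
  shows "\<exists>j\<in>{2..n+1}. t \<le> b j + (1 / real n - t) * b 1"
proof (rule ccontr)
  assume "\<not> ?thesis"
  hence lt: "\<forall>j\<in>{2..n+1}. b j + (1 / real n - t) * b 1 < t" by auto
  define r where "r = real n"
  define x where "x = b 1"
  define J where "J = {2..n+1}"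
  define a where "a j = b j + x / r" for j
  define m where "m = t * (1 + x)"
  have r2: "r \<ge> 2" unfolding r_def using n2 by simp
  have split: "{1..n+1} = insert 1 J" unfolding J_def by auto
  have fJ: "finite J" "1 \<notin> J" unfolding J_def by auto
  have cardJ: "card J = n" unfolding J_def by simp
  have am: "a j < m" if "j \<in> J" for j
    using lt that unfolding a_def m_def J_def x_def r_def by (auto simp: algebra_simps)
  have sb: "(\<Sum>j\<in>J. b j) = - x" using s0 fJ unfolding split x_def by simp
  have sb2: "(\<Sum>j\<in>J. (b j)^2) = (r + 1) / r - x^2" using s2 fJ unfolding split x_def r_def by simp
  have sa: "(\<Sum>j\<in>J. a j) = 0"
    unfolding a_def sum.distrib sb using cardJ r2 unfolding r_def by simp
  have sa2: "(\<Sum>j\<in>J. (a j)^2) = (r + 1) * (1 - x^2) / r"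
  proof -
    have "(\<Sum>j\<in>J. (a j)^2) = (\<Sum>j\<in>J. (b j)^2 + 2 * (x / r) * b j + (x / r)^2)"
      unfolding a_def by (simp add: power2_eq_square algebra_simps)
    also have "\<dots> = (\<Sum>j\<in>J. (b j)^2) + 2 * (x / r) * (\<Sum>j\<in>J. b j) + real n * (x / r)^2"
      by (simp add: sum.distrib sum_distrib_left cardJ)
    also have "\<dots> = (r + 1) * (1 - x^2) / r"
      unfolding sb2 sb using alg1[of "real n" x] n2 unfolding r_def by simp
    finally show ?thesis .
  qed
  have mpos: "m > 0"
  proof -
    have "(\<Sum>j\<in>J. a j) < (\<Sum>j\<in>J. m)"
      by (rule sum_strict_mono) (use fJ am cardJ n2 in auto)
    thus ?thesis using sa cardJ n2 by (simp add: zero_less_mult_iff)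
  qed
  have alow: "a j \<ge> - (r - 1) * m" if j: "j \<in> J" for j
  proof -
    have "(\<Sum>i\<in>J. a i) = a j + (\<Sum>i\<in>J - {j}. a i)" using fJ j by (simp add: sum.remove)
    moreover have "(\<Sum>i\<in>J - {j}. a i) \<le> (\<Sum>i\<in>J - {j}. m)"
      by (rule sum_mono) (use am in \<open>auto intro: less_imp_le\<close>)
    moreover have "card (J - {j}) = n - 1" using j fJ cardJ by simp
    moreover have "real (n - 1) = r - 1" unfolding r_def using n2 by (simp add: of_nat_diff)
    ultimately have "(\<Sum>i\<in>J - {j}. m) = (r - 1) * m" by simp
    thus ?thesis using sa \<open>(\<Sum>i\<in>J - {j}. a i) \<le> (\<Sum>i\<in>J - {j}. m)\<close> \<open>(\<Sum>i\<in>J. a i) = a j + (\<Sum>i\<in>J - {j}. a i)\<close> by linarith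
  qed
  have "0 \<le> (\<Sum>j\<in>J. (m - a j) * (a j + (r - 1) * m))"
  proof (rule sum_nonneg)
    fix j assume "j \<in> J"
    from am[OF this] alow[OF this] show "0 \<le> (m - a j) * (a j + (r - 1) * m)"
      by (intro mult_nonneg_nonneg) (auto simp: algebra_simps)
  qed
  also have "(\<Sum>j\<in>J. (m - a j) * (a j + (r - 1) * m))
      = (\<Sum>j\<in>J. (r - 1) * m^2 - (r - 2) * m * a j - (a j)^2)"
    by (rule sum.cong) (simp_all add: power2_eq_square algebra_simps)
  also have "\<dots> = r * (r - 1) * m^2 - (r + 1) * (1 - x^2) / r"
    unfolding sum_subtractf sum_distrib_left[symmetric] sa sa2 using cardJ unfolding r_def by simp
  finally have ineq: "(r + 1) * (1 - x^2) / r \<le> r * (r - 1) * m^2" by simp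
  have x1: "1 + x > 0" using mpos t unfolding m_def by (simp add: zero_less_mult_iff)
  have ineq2: "(r + 1) * (1 - x) \<le> r^2 * (r - 1) * t^2 * (1 + x)"
  proof -
    have "(r + 1) * (1 - x) * (1 + x) \<le> r^2 * (r - 1) * t^2 * (1 + x) * (1 + x)"
    proof -
      have "(r + 1) * (1 - x^2) = r * ((r + 1) * (1 - x^2) / r)" using r2 by simp
      also have "\<dots> \<le> r * (r * (r - 1) * m^2)" using ineq r2 by (intro mult_left_mono) auto
      finally have i1: "(r + 1) * (1 - x^2) \<le> r * (r * (r - 1) * m^2)" .
      have e1: "(r + 1) * (1 - x) * (1 + x) = (r + 1) * (1 - x^2)" by (simp add: power2_eq_square algebra_simps)
      have e2: "r^2 * (r - 1) * t^2 * (1 + x) * (1 + x) = r * (r * (r - 1) * m^2)"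
        unfolding m_def by (simp add: power2_eq_square algebra_simps)
      show ?thesis unfolding e1 e2 by (rule i1)
    qed
    thus ?thesis using x1 by simp
  qed
  have c1: "1 - c^2 > 0" using c r2 unfolding r_def[symmetric] 
  proof -
    have "1 / r \<le> 1 / 2" using r2 by (intro divide_left_mono) auto
    hence "c < 1" using c unfolding r_def by simp
    thus ?thesis using c by (simp add: power_less_one_iff abs_square_less_1)
  qed
  have ineq3: "(1 - x) * (1 - c^2) \<le> (r - 1)^2 * c^2 * (1 + x)"
  proof -
    have "(r + 1) * ((1 - x) * (1 - c^2)) \<le> r^2 * (r - 1) * (t^2 * (1 - c^2)) * (1 + x)"
      using mult_right_mono[OF ineq2, of "1 - c^2"] c1 by (simp add: algebra_simps)
    also have "\<dots> = (r + 1) * ((r - 1)^2 * c^2 * (1 + x))"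
      unfolding t(2) using alg3[of r c x] r2 unfolding r_def by simp
    finally show ?thesis using r2 by simp
  qed
  have xc: "x < c" using x unfolding x_def .
  have "r * c \<le> r * (1 / r)" using c r2 unfolding r_def by (intro mult_left_mono) auto
  hence rc: "(r - 1) * c \<le> 1 - c" using r2 by (simp add: algebra_simps)
  have "(r - 1)^2 * c^2 * (1 + x) \<le> (1 - c)^2 * (1 + c)"
  proof -
    have "((r - 1) * c)^2 \<le> (1 - c)^2"
      using rc r2 c by (intro power_mono) auto
    hence "(r - 1)^2 * c^2 \<le> (1 - c)^2" by (simp add: power_mult_distrib)
    thus ?thesis using xc x1 by (intro mult_mono) auto
  qed
  also have "\<dots> = (1 - c) * (1 - c^2)" by (simp add: power2_eq_square algebra_simps)
  also have "\<dots> < (1 - x) * (1 - c^2)" using xc c1 by (intro mult_strict_right_mono) auto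
  finally show False using ineq3 by simp
qed

lemma ps_univ:
  fixes S :: "'a::real_vector set"
  assumes fin: "finite S" and sp: "\<And>x. x \<in> span S"
    and wpos: "\<And>q. q \<in> S \<Longrightarrow> w q > 0" and w0: "(\<Sum>q\<in>S. w q *\<^sub>R q) = 0"
  shows "positive_span S = UNIV"
proof -
  have "x \<in> positive_span S" for x
  proof -
    from sp[of x] obtain \<mu> where mu: "(\<Sum>q\<in>S. \<mu> q *\<^sub>R q) = x"
      unfolding span_finite[OF fin] by auto
    define K where "K = (\<Sum>q\<in>S. \<bar>\<mu> q\<bar> / w q)"
    define l where "l q = \<mu> q + K * w q" for q
    have lpos: "0 \<le> l q" if q: "q \<in> S" for q
    proof -
      have "\<bar>\<mu> q\<bar> / w q \<le> K" unfolding K_def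
        by (rule member_le_sum) (use fin q wpos in \<open>auto intro: divide_nonneg_pos\<close>)
      hence "\<bar>\<mu> q\<bar> \<le> K * w q" using wpos[OF q] by (simp add: divide_le_eq)
      thus ?thesis unfolding l_def by linarith
    qed
    have "(\<Sum>q\<in>S. l q *\<^sub>R q) = (\<Sum>q\<in>S. \<mu> q *\<^sub>R q) + K *\<^sub>R (\<Sum>q\<in>S. w q *\<^sub>R q)"
      unfolding l_def by (simp add: scaleR_add_left sum.distrib scaleR_sum_right)
    also have "\<dots> = x" using mu w0 by simp
    finally show ?thesis unfolding positive_span_def using lpos by auto
  qed
  thus ?thesis by auto
qed

lemma abstract_main:
  fixes d :: "nat \<Rightarrow> 'a::euclidean_space" and n :: nat and p :: "nat \<Rightarrow> 'a"
  assumes n2: "n \<ge> 2"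
    and G: "\<And>j k. j \<in> {1..n+1} \<Longrightarrow> k \<in> {1..n+1} \<Longrightarrow> inner (d j) (d k) = (if j = k then 1 else - 1 / real n)"
    and S: "(\<Sum>j\<in>{1..n+1}. d j) = 0"
    and T: "\<And>x. (\<Sum>j\<in>{1..n+1}. inner (d j) x *\<^sub>R d j) = ((real n + 1) / real n) *\<^sub>R x"
    and dl: "0 \<le> \<delta>" "\<delta> < 1 / real n"
    and al: "\<alpha> > 0" "\<alpha>^2 * (1 - 2 * \<delta> / real n + \<delta>^2) = 1"
    and ac: "\<alpha> * (1 / real n - \<delta>) = c"
    and c: "0 < c" "c \<le> 1 / real n"
    and p: "\<And>j. p j = (if j = 1 then d 1 else \<alpha> *\<^sub>R (d j + \<delta> *\<^sub>R d 1))"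
  shows "positive_basis (p ` {1..n+1}) \<and> cosine_measure (p ` {1..n+1}) = c"
proof -
  define I where "I = {1..n+1}"
  define P where "P = p ` I"
  define r where "r = real n"
  define t where "t = 1 / r - \<delta>"
  have r2: "r \<ge> 2" unfolding r_def using n2 by simp
  have I1: "1 \<in> I" unfolding I_def by simp
  have finI: "finite I" unfolding I_def by simp
  have G': "\<And>j k. j \<in> I \<Longrightarrow> k \<in> I \<Longrightarrow> inner (d j) (d k) = (if j = k then 1 else - 1 / r)"
    using G unfolding I_def r_def by blast
  have tpos: "t > 0"
  proof -
    have "\<alpha> * t > 0" using ac c unfolding t_def r_def by simp
    thus ?thesis using al(1) by (simp add: zero_less_mult_iff)
  qed
  have act: "\<alpha> * t = c" using ac unfolding t_def r_def .
  have dlr: "\<delta> * r < 1" using dl r2 unfolding r_def by (simp add: field_simps)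
  have al2: "\<alpha>^2 * (t^2 + (r^2 - 1) / r^2) = 1"
  proof -
    have "1 - 2 * \<delta> / r + \<delta>^2 = t^2 + (r^2 - 1) / r^2"
      unfolding t_def using r2 by (simp add: field_simps power2_eq_square)
    thus ?thesis using al(2) unfolding r_def by simp
  qed
  have tc: "t^2 * (1 - c^2) = c^2 * (r^2 - 1) / r^2"
  proof -
    have "t^2 * (1 - c^2) = t^2 * (1 - \<alpha>^2 * t^2)" unfolding act[symmetric] by (simp add: power_mult_distrib)
    also have "1 - \<alpha>^2 * t^2 = \<alpha>^2 * ((r^2 - 1) / r^2)" using al2 by (simp add: algebra_simps)
    also have "t^2 * (\<alpha>^2 * ((r^2 - 1) / r^2)) = (\<alpha> * t)^2 * (r^2 - 1) / r^2"
      by (simp add: power_mult_distrib)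
    finally show ?thesis unfolding act .
  qed
  have pin: "\<And>j y. inner (p j) y = (if j = 1 then inner (d 1) y else \<alpha> * (inner (d j) y + \<delta> * inner (d 1) y))"
    unfolding p by (simp add: inner_add_left)
  have norm1: "norm (p j) = 1" if j: "j \<in> I" for j
  proof (cases "j = 1")
    case True thus ?thesis using G'[OF j j] unfolding p by (simp add: norm_eq_1)
  next
    case False
    have "inner (p j) (p j) = \<alpha> * \<alpha> * (inner (d j) (d j) + 2 * \<delta> * inner (d j) (d 1) + \<delta>^2 * inner (d 1) (d 1))"
      unfolding p using False by (simp add: inner_add_left inner_add_right inner_commute power2_eq_square algebra_simps)
    also have "\<dots> = \<alpha>^2 * (1 - 2 * \<delta> / real n + \<delta>^2)"
      using G'[OF j I1] G'[OF j j] G'[OF I1 I1] False unfolding r_def by (simp add: power2_eq_square)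
    finally show ?thesis using al(2) by (simp add: norm_eq_1)
  qed
  have sep: "inner (p j) (d k) < 0" if j: "j \<in> I" and k: "k \<in> I" and jk: "j \<noteq> k" for j k
  proof -
    have rp: "r > 0" using r2 by simp
    show ?thesis
    proof (cases "j = 1")
      case True thus ?thesis using G'[OF j k] jk rp unfolding pin by simp
    next
      case False
      show ?thesis
      proof (cases "k = 1")
        case True
        have "inner (p j) (d k) = \<alpha> * (- t)"
          using G'[OF j k] G'[OF k k] False True jk unfolding pin t_def by simp
        thus ?thesis using al(1) tpos by (simp add: mult_pos_neg)
      next
        case False2: False
        have "inner (p j) (d k) = - (\<alpha> / r) - \<alpha> * \<delta> / r"
          using G'[OF j k] G'[OF I1 k] False False2 jk unfolding pin by (simp add: algebra_simps)
        moreover have "\<alpha> / r > 0" "\<alpha> * \<delta> / r \<ge> 0" using al(1) dl rp by auto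
        ultimately show ?thesis by linarith
      qed
    qed
  qed
  have selfpos: "inner (p k) (d k) > 0" if k: "k \<in> I" for k
  proof (cases "k = 1")
    case True thus ?thesis using G'[OF k k] unfolding pin by simp
  next
    case False
    have "inner (p k) (d k) = \<alpha> * (1 - \<delta> / r)"
      using G'[OF k k] G'[OF I1 k] False unfolding pin by simp
    moreover have "\<delta> / r < 1"
    proof -
      have "\<delta> * 2 \<le> \<delta> * r" using dl r2 by (intro mult_left_mono) auto
      hence "\<delta> < r" using dlr r2 by linarith
      thus ?thesis using r2 by (simp add: field_simps)
    qed
    ultimately show ?thesis using al(1) by simp
  qed
  have inj: "inj_on p I"
  proof (rule inj_onI)
    fix j k assume j: "j \<in> I" and k: "k \<in> I" and e: "p j = p k"
    show "j = k"
    proof (rule ccontr)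
      assume "j \<noteq> k"
      from sep[OF k j] this selfpos[OF j] e show False by simp
    qed
  qed
  have finP: "finite P" unfolding P_def using finI by simp
  have p1d: "p 1 = d 1" using p by simp
  have dspan: "d j \<in> span P" if j: "j \<in> I" for j
  proof (cases "j = 1")
    case True
    have "p 1 \<in> P" using I1 unfolding P_def by simp
    thus ?thesis using True p1d by (auto intro: span_base)
  next
    case False
    have "d j = (1 / \<alpha>) *\<^sub>R p j - \<delta> *\<^sub>R p 1"
      using False al(1) unfolding p by (simp add: scaleR_add_right)
    moreover have "p j \<in> span P" "p 1 \<in> span P" using j I1 unfolding P_def by (auto intro: span_base)
    ultimately show ?thesis by (metis span_diff span_scale)
  qed
  have xspan: "x \<in> span P" for x
  proof -
    have "x = (r / (r + 1)) *\<^sub>R (\<Sum>j\<in>I. inner (d j) x *\<^sub>R d j)"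
      using T[of x] r2 unfolding I_def r_def[symmetric] by simp
    also have "\<dots> \<in> span P" by (intro span_scale span_sum) (use dspan in auto)
    finally show ?thesis .
  qed
  define w where "w q = (if q = p 1 then \<alpha> * (1 - r * \<delta>) else 1)" for q
  have wpos: "w q > 0" if "q \<in> P" for q
    using al(1) dlr unfolding w_def by (simp add: mult.commute)
  have w0: "(\<Sum>q\<in>P. w q *\<^sub>R q) = 0"
  proof -
    have "(\<Sum>q\<in>P. w q *\<^sub>R q) = (\<Sum>j\<in>I. w (p j) *\<^sub>R p j)"
      unfolding P_def by (rule sum.reindex[OF inj, unfolded comp_def])
    also have "I = insert 1 {2..n+1}" unfolding I_def by auto
    also have "(\<Sum>j\<in>insert 1 {2..n+1}. w (p j) *\<^sub>R p j) = (\<alpha> * (1 - r * \<delta>)) *\<^sub>R d 1 + (\<Sum>j\<in>{2..n+1}. p j)"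
    proof -
      have wj: "w (p j) = 1" if "j \<in> {2..n+1}" for j
      proof -
        have "j \<in> I" "j \<noteq> 1" using that unfolding I_def by auto
        hence "p j \<noteq> p 1" using inj I1 unfolding inj_on_def by metis
        thus ?thesis unfolding w_def by simp
      qed
      have sumw: "(\<Sum>j\<in>{2..n+1}. w (p j) *\<^sub>R p j) = (\<Sum>j\<in>{2..n+1}. p j)"
        by (rule sum.cong) (auto simp: wj)
      have "(\<Sum>j\<in>insert 1 {2..n+1}. w (p j) *\<^sub>R p j) = w (p 1) *\<^sub>R p 1 + (\<Sum>j\<in>{2..n+1}. w (p j) *\<^sub>R p j)"
        by (rule sum.insert) auto
      moreover have w1: "w (p 1) = \<alpha> * (1 - r * \<delta>)" unfolding w_def by simp
      ultimately show ?thesis unfolding sumw w1 p1d by simp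
    qed
    also have "(\<Sum>j\<in>{2..n+1}. p j) = \<alpha> *\<^sub>R ((\<Sum>j\<in>{2..n+1}. d j) + (r * \<delta>) *\<^sub>R d 1)"
    proof -
      have "(\<Sum>j\<in>{2..n+1}. p j) = (\<Sum>j\<in>{2..n+1}. \<alpha> *\<^sub>R (d j + \<delta> *\<^sub>R d 1))"
        by (rule sum.cong) (auto simp: p)
      also have "\<dots> = \<alpha> *\<^sub>R ((\<Sum>j\<in>{2..n+1}. d j) + (\<Sum>j\<in>{2..n+1}. \<delta> *\<^sub>R d 1))"
        by (simp only: scaleR_sum_right[symmetric] sum.distrib)
      also have "(\<Sum>j\<in>{2..n+1}. \<delta> *\<^sub>R d 1) = real (card {2..n+1}) *\<^sub>R (\<delta> *\<^sub>R d 1)"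
        by (rule sum_constant_scaleR)
      also have "real (card {2..n+1}) *\<^sub>R (\<delta> *\<^sub>R d 1) = (r * \<delta>) *\<^sub>R d 1"
        unfolding r_def by simp
      finally show ?thesis .
    qed
    also have "(\<Sum>j\<in>{2..n+1}. d j) = - d 1"
    proof -
      have "{1..n+1} = insert 1 {2..n+1}" by auto
      hence "d 1 + (\<Sum>j\<in>{2..n+1}. d j) = 0" using S by simp
      thus ?thesis by (simp add: eq_neg_iff_add_eq_0 add.commute)
    qed
    finally show ?thesis by (simp add: algebra_simps)
  qed
  have ps: "positive_span P = UNIV" by (rule ps_univ[OF finP xspan wpos w0])
  have minimal: "\<forall>q\<in>P. q \<notin> positive_span (P - {q})"
  proof
    fix q assume "q \<in> P"
    then obtain k where k: "k \<in> I" "q = p k" unfolding P_def by auto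
    show "q \<notin> positive_span (P - {q})"
    proof
      assume "q \<in> positive_span (P - {q})"
      then obtain l where l: "\<forall>e\<in>P - {q}. 0 \<le> l e" "q = (\<Sum>e\<in>P - {q}. l e *\<^sub>R e)"
        unfolding positive_span_def by auto
      have "inner q (d k) = (\<Sum>e\<in>P - {q}. l e * inner e (d k))"
        by (subst l(2)) (simp add: inner_sum_left)
      also have "\<dots> \<le> 0"
      proof (rule sum_nonpos)
        fix e assume e: "e \<in> P - {q}"
        then obtain j where j: "j \<in> I" "e = p j" unfolding P_def by auto
        with e k have "j \<noteq> k" by auto
        hence "inner e (d k) < 0" using sep[OF j(1) k(1)] j by simp
        thus "l e * inner e (d k) \<le> 0" using l(1) e by (simp add: mult_nonneg_nonpos)
      qed
      finally show False using selfpos[OF k(1)] k(2) by simp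
    qed
  qed
  have pb: "positive_basis P" unfolding positive_basis_def using finP ps minimal by auto
  have P_ne: "P \<noteq> {}" using I1 unfolding P_def by auto
  define f where "f u = (MAX q\<in>P. inner q u)" for u
  have cm: "cosine_measure P = (INF u\<in>sphere 0 1. f u)"
  proof -
    have "(\<lambda>q. inner q u / norm q) ` P = (\<lambda>q. inner q u) ` P" for u
      by (rule image_cong) (auto simp: P_def norm1)
    thus ?thesis unfolding cosine_measure_def f_def by simp
  qed
  have lower: "c \<le> f u" if u: "u \<in> sphere 0 1" for u
  proof -
    have nu: "inner u u = 1" using u by (simp add: norm_eq_1[symmetric])
    define b where "b j = inner (d j) u" for j
    have s0: "(\<Sum>j\<in>{1..n+1}. b j) = 0" unfolding b_def inner_sum_left[symmetric] S by simp
    have s2: "(\<Sum>j\<in>{1..n+1}. (b j)^2) = (real n + 1) / real n"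
    proof -
      have "(\<Sum>j\<in>{1..n+1}. (b j)^2) = inner (\<Sum>j\<in>{1..n+1}. inner (d j) u *\<^sub>R d j) u"
        unfolding inner_sum_left b_def by (simp add: power2_eq_square)
      also have "\<dots> = (real n + 1) / real n" unfolding T using nu by simp
      finally show ?thesis .
    qed
    have ex: "\<exists>j\<in>I. c \<le> inner (p j) u"
    proof (cases "c \<le> b 1")
      case True thus ?thesis using I1 unfolding pin b_def by auto
    next
      case False
      have tc': "t^2 * (1 - c^2) = c^2 * ((real n)^2 - 1) / (real n)^2" using tc unfolding r_def .
      obtain j where j: "j \<in> {2..n+1}" "t \<le> b j + (1 / real n - t) * b 1"
        using key_ineq[OF n2 s0 s2 c tpos tc'] False by auto
      have dd: "1 / real n - t = \<delta>" unfolding t_def r_def by simp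
      have "c = \<alpha> * t" using act by simp
      also have "\<dots> \<le> \<alpha> * (b j + \<delta> * b 1)" using j(2) al(1) unfolding dd by simp
      also have "\<dots> = inner (p j) u" using j(1) unfolding pin b_def by simp
      finally show ?thesis using j(1) unfolding I_def by auto
    qed
    show ?thesis unfolding f_def using ex finP P_ne unfolding P_def by (auto simp: Max_ge_iff)
  qed
  define u0 where "u0 = - d 1"
  have u0s: "u0 \<in> sphere 0 1" using G'[OF I1 I1] unfolding u0_def by (simp add: norm_eq_1)
  have upper: "f u0 \<le> c"
  proof -
    have "inner (p j) u0 \<le> c" if j: "j \<in> I" for j
    proof (cases "j = 1")
      case True thus ?thesis using G'[OF I1 I1] c unfolding pin u0_def by simp
    next
      case False
      have "inner (p j) u0 = \<alpha> * t"
        using G'[OF j I1] G'[OF I1 I1] False unfolding pin u0_def t_def by (simp add: algebra_simps)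
      thus ?thesis using act by simp
    qed
    thus ?thesis unfolding f_def using finP P_ne unfolding P_def by auto
  qed
  have "cosine_measure P = c"
  proof (rule antisym)
    have "(INF u\<in>sphere 0 1. f u) \<le> f u0"
      by (rule cINF_lower[OF bdd_belowI2[OF lower] u0s])
    thus "cosine_measure P \<le> c" using upper cm by simp
  next
    show "c \<le> cosine_measure P" unfolding cm
      by (rule cINF_greatest) (use u0s lower in auto)
  qed
  thus ?thesis using pb unfolding P_def I_def by simp
qed

lemma algDe: "(R::real) \<noteq> 0 \<Longrightarrow> R^2 * d^2 - 2 * R * d + R^2 = R^2 * (1 - 2 * d / R + d^2)"
  by (simp add: field_simps power2_eq_square)
lemma algDe2: "(R::real) \<noteq> 0 \<Longrightarrow> R^2 * (1/R - t)^2 - 2 * R * (1/R - t) + R^2 = R^2 * t^2 + (R^2 - 1)"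
  by (simp add: field_simps power2_eq_square)
lemma algfin: "(A::real) > 0 \<Longrightarrow> 1 - c^2 > 0 \<Longrightarrow> c^2 * A / (1 - c^2) / (c^2 * A / (1 - c^2) + A) = c^2"
proof -
  assume A: "A > 0" and y: "1 - c^2 > 0"
  have "c^2 * A / (1 - c^2) + A = A / (1 - c^2)" using y by (simp add: field_simps)
  thus ?thesis using A y by simp
qed

lemma scalar_facts:
  fixes n :: nat and c :: real
  assumes n2: "n \<ge> 2" and c: "0 < c" "c \<le> 1 / real n"
  shows "0 \<le> delta_of n c" "delta_of n c < 1 / real n"
    "alpha_of n (delta_of n c) > 0"
    "(alpha_of n (delta_of n c))^2 * (1 - 2 * delta_of n c / real n + (delta_of n c)^2) = 1"
    "alpha_of n (delta_of n c) * (1 / real n - delta_of n c) = c"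
proof -
  define r where "r = real n"
  define \<delta> where "\<delta> = delta_of n c"
  define Q where "Q = sqrt (- ((real n)^2 - 1) * (c^4 - c^2))"
  have r2: "r \<ge> 2" unfolding r_def using n2 by simp
  have rc: "r * c \<le> 1"
  proof -
    have "r * c \<le> r * (1 / r)" using c r2 unfolding r_def by (intro mult_left_mono) auto
    thus ?thesis using r2 by simp
  qed
  have "1 / r \<le> 1 / 2" using r2 by (intro divide_left_mono) auto
  hence c1: "c < 1" using c unfolding r_def by linarith
  have c2: "1 - c^2 > 0" using c1 c by (simp add: abs_square_less_1)
  have Qe: "Q = c * sqrt ((r^2 - 1) * (1 - c^2))"
  proof -
    have e: "- ((real n)^2 - 1) * (c^4 - c^2) = c^2 * ((r^2 - 1) * (1 - c^2))"
      unfolding r_def by algebra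
    have "Q = sqrt (c^2 * ((r^2 - 1) * (1 - c^2)))" unfolding Q_def e ..
    also have "\<dots> = c * sqrt ((r^2 - 1) * (1 - c^2))" using c by (simp add: real_sqrt_mult)
    finally show ?thesis .
  qed
  have "r^2 \<ge> 2^2" using r2 by (intro power_mono) auto
  hence r21: "r^2 - 1 > 0" by simp
  have X: "(r^2 - 1) * (1 - c^2) > 0" using r21 c2 by simp
  have Qpos: "Q > 0" unfolding Qe using c X by simp
  have Q2: "Q^2 = c^2 * ((r^2 - 1) * (1 - c^2))" unfolding Qe using X by (simp add: power_mult_distrib)
  define t where "t = Q / (r * (1 - c^2))"
  have dt: "\<delta> = 1 / r - t"
  proof -
    have d0: "\<delta> = 1 / r + Q / (r * (c^2 - 1))" unfolding \<delta>_def delta_of_def Q_def r_def by (rule refl)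
    have "r * (c^2 - 1) = - (r * (1 - c^2))" by (simp add: algebra_simps)
    thus ?thesis unfolding d0 t_def by simp
  qed
  have tpos: "t > 0" unfolding t_def using Qpos c2 r2 by simp
  have t2: "r^2 * t^2 = c^2 * (r^2 - 1) / (1 - c^2)"
  proof -
    have "r^2 * t^2 = Q^2 / (1 - c^2)^2" unfolding t_def using r2 by (simp add: power_divide power_mult_distrib)
    also have "\<dots> = c^2 * (r^2 - 1) * (1 - c^2) / ((1 - c^2) * (1 - c^2))" unfolding Q2 by (simp add: power2_eq_square mult.assoc)
    also have "\<dots> = c^2 * (r^2 - 1) / (1 - c^2)" using c2 by simp
    finally show ?thesis .
  qed
  have tle: "t \<le> 1 / r"
  proof -
    have "Q^2 \<le> (1 - c^2)^2"
    proof -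
      have "c^2 * (r^2 - 1) \<le> 1 - c^2"
      proof -
        have "(r * c)^2 \<le> 1^2" using rc r2 c by (intro power_mono) auto
        thus ?thesis by (simp add: power_mult_distrib algebra_simps)
      qed
      hence "c^2 * (r^2 - 1) * (1 - c^2) \<le> (1 - c^2) * (1 - c^2)" using c2 by (intro mult_right_mono) auto
      thus ?thesis unfolding Q2 by (simp add: power2_eq_square algebra_simps)
    qed
    hence "Q \<le> 1 - c^2" by (rule power2_le_imp_le) (use c2 in simp)
    hence "Q / (1 - c^2) \<le> 1" using c2 by simp
    hence "Q / (1 - c^2) / r \<le> 1 / r" using r2 by (intro divide_right_mono) auto
    thus ?thesis unfolding t_def by (simp add: divide_divide_eq_left mult.commute)
  qed
  show "0 \<le> delta_of n c" using tle dt unfolding \<delta>_def by simp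
  show "delta_of n c < 1 / real n" using tpos dt unfolding \<delta>_def r_def by simp
  define D where "D = (real n)^2 * \<delta>^2 - 2 * real n * \<delta> + (real n)^2"
  have r0: "r \<noteq> 0" using r2 by simp
  have De: "D = r^2 * (1 - 2 * \<delta> / r + \<delta>^2)" unfolding D_def r_def[symmetric] by (rule algDe[OF r0])
  have De2: "D = r^2 * t^2 + (r^2 - 1)" unfolding D_def r_def[symmetric] dt by (rule algDe2[OF r0])
  have "r^2 * t^2 \<ge> 0" by simp
  hence Dpos: "D > 0" unfolding De2 using r21 by linarith
  have ad: "alpha_of n \<delta> = r / sqrt D" unfolding alpha_of_def D_def r_def ..
  show "alpha_of n (delta_of n c) > 0" using Dpos r2 unfolding \<delta>_def[symmetric] ad by simp
  show "(alpha_of n (delta_of n c))^2 * (1 - 2 * delta_of n c / real n + (delta_of n c)^2) = 1"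
  proof -
    define X where "X = 1 - 2 * \<delta> / r + \<delta>^2"
    have sD: "(sqrt D)^2 = D" using Dpos by simp
    have X0: "X \<noteq> 0" "r \<noteq> 0" using Dpos r2 unfolding De X_def[symmetric] by auto
    have "(r / sqrt D)^2 * X = r^2 / D * X" by (simp add: power_divide sD)
    also have "\<dots> = 1" unfolding De X_def[symmetric] using X0 by simp
    finally show ?thesis unfolding \<delta>_def[symmetric] ad r_def[symmetric] X_def .
  qed
  have "(alpha_of n \<delta> * t)^2 = c^2"
  proof -
    have sD: "(sqrt D)^2 = D" using Dpos by simp
    have "(alpha_of n \<delta> * t)^2 = r^2 * t^2 / D" unfolding ad by (simp add: power_divide power_mult_distrib sD)
    also have "\<dots> = c^2" unfolding De2 t2 by (rule algfin[OF r21 c2])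
    finally show ?thesis .
  qed
  note sq = this
  have a0: "alpha_of n \<delta> > 0" unfolding ad using Dpos r2 by simp
  have p1: "0 \<le> alpha_of n \<delta> * t" using a0 tpos by simp
  have p2: "0 \<le> c" using c by simp
  have "alpha_of n \<delta> * t = c" by (rule power2_eq_imp_eq[OF sq p1 p2])
  thus "alpha_of n (delta_of n c) * (1 / real n - delta_of n c) = c"
    unfolding \<delta>_def[symmetric] r_def[symmetric] dt by simp
qed

theorem corollary2:
  fixes c :: real and idx :: "'n::finite \<Rightarrow> nat"
  assumes "CARD('n) \<ge> 2"
    and "bij_betw idx UNIV {1..CARD('n)}"
    and "0 < c" and "c \<le> 1 / real CARD('n)"
  shows "0 \<le> delta_of CARD('n) c \<and> delta_of CARD('n) c < 1 / real CARD('n)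
    \<and> positive_basis (Pdelta_set idx (delta_of CARD('n) c))
    \<and> cosine_measure (Pdelta_set idx (delta_of CARD('n) c)) = c"
proof -
  note sf = scalar_facts[OF assms(1) assms(3) assms(4)]
  define \<delta> where "\<delta> = delta_of CARD('n) c"
  define \<alpha> where "\<alpha> = alpha_of CARD('n) \<delta>"
  define d where "d = simplex_col idx"
  have pe: "Pdelta_col idx \<delta> j = (if j = 1 then d 1 else \<alpha> *\<^sub>R (d j + \<delta> *\<^sub>R d 1))" for j
    unfolding Pdelta_col_def d_def \<alpha>_def e1_col[OF assms(2)] ..
  have G: "inner (d j) (d k) = (if j = k then 1 else - 1 / real CARD('n))"
    if "j \<in> {1..CARD('n)+1}" "k \<in> {1..CARD('n)+1}" for j k
    using col_inner[OF assms(2), of j k] that unfolding d_def by auto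
  have S: "(\<Sum>j\<in>{1..CARD('n)+1}. d j) = 0" unfolding d_def by (rule col_sum0[OF assms(2)])
  have T: "(\<Sum>j\<in>{1..CARD('n)+1}. inner (d j) x *\<^sub>R d j) = ((real CARD('n) + 1) / real CARD('n)) *\<^sub>R x" for x
    unfolding d_def by (rule col_frame[OF assms(2)])
  have m: "positive_basis (Pdelta_col idx \<delta> ` {1..CARD('n)+1}) \<and> cosine_measure (Pdelta_col idx \<delta> ` {1..CARD('n)+1}) = c"
    by (rule abstract_main[OF assms(1) G S T sf(1,2)[folded \<delta>_def] sf(3,4,5)[folded \<delta>_def, folded \<alpha>_def] assms(3,4) pe])
  show ?thesis using sf(1,2) m unfolding Pdelta_set_def \<delta>_def by simp
qed

end
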